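(* Let $\mathcal{X}_k \in \{\mathcal{E}_k, \mathcal{F}_k\}$ for $1 \leq k \leq n$. For any $\lambda \in R$ and $1< i,j \leq n$, \[1 + \lambda \mathcal{X}_i\mathcal{X}_j = [1+ \lambda \mathcal{X}_i\mathcal{X}_1,\ 1 + \mathcal{X}_1\mathcal{X}_j].\]
   Context: Let $R$ be a commutative ring. For $v=(a_1,\dots,a_n), w=(b_1,\dots,b_n)\in R^n$ the Suslin matrix $\mathcal{S}_{n-1}(v,w)$ is defined recursively: $\mathcal{S}_1(v,w)=\begin{pmatrix} a_1 & a_2\\ -b_2 & b_1\end{pmatrix}$, $\overline{\mathcal{S}_1(v,w)}=\begin{pmatrix} b_1 & -a_2\\ b_2 & a_1\end{pmatrix}$, and with $v=(a_1,v')$, $w=(b_1,w')$, $\mathcal{S}_{n-1}(v,w)=\begin{pmatrix} a_1 & \mathcal{S}_{n-2}(v',w')\\ -\overline{\mathcal{S}_{n-2}(v',w')} & b_1\end{pmatrix}$, $\overline{\mathcal{S}_{n-1}(v,w)}=\begin{pmatrix} b_1 & -\mathcal{S}_{n-2}(v',w')\\ \overline{\mathcal{S}_{n-2}(v',w')} & a_1\end{pmatrix}$. Set $\mathcal{E}_i = \mathcal{S}_{n-1}(e_i,0)$, $\mathcal{F}_i = \mathcal{S}_{n-1}(0,f_i)$ for standard basis vectors $e_i$, $f_i$. The commutator is $[a,b]=aba^{-1}b^{-1}$. *)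

theory Defs
  imports "Jordan_Normal_Form.Matrix"
begin

text \<open>Vectors v = (a_1,...,a_n) in R^n are represented as functions nat => 'a,
  with a_k = v k for 1 <= k <= n (entries outside 1..n are ignored).
  suslin_pair m v w = (S_m(v,w), conjugate of S_m(v,w)), a pair of 2^m x 2^m matrices,
  depending only on v 1 .. v (m+1), w 1 .. w (m+1).
  The recursion follows the paper literally: S_1 is given explicitly, and
  S_m(v,w) = [[a_1 I, S_{m-1}(v',w')], [-conj S_{m-1}(v',w'), b_1 I]] with v' = (a_2,...),
  where the scalar a_1 stands for a_1 times the identity of size 2^(m-1).
  The case m = 0 is never used in the statement (it is a 1x1 placeholder).\<close>

fun suslin_pair :: "nat \<Rightarrow> (nat \<Rightarrow> 'a::comm_ring_1) \<Rightarrow> (nat \<Rightarrow> 'a) \<Rightarrow> 'a mat \<times> 'a mat" where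
  "suslin_pair 0 v w = (mat 1 1 (\<lambda>_. v 1), mat 1 1 (\<lambda>_. w 1))"
| "suslin_pair (Suc 0) v w =
     (mat_of_rows_list 2 [[v 1, v 2], [- w 2, w 1]],
      mat_of_rows_list 2 [[w 1, - v 2], [w 2, v 1]])"
| "suslin_pair (Suc (Suc m)) v w =
     (let v' = (\<lambda>k. v (Suc k)); w' = (\<lambda>k. w (Suc k));
          P = suslin_pair (Suc m) v' w'; S = fst P; Sb = snd P;
          d = 2 ^ Suc m
      in (four_block_mat (v 1 \<cdot>\<^sub>m 1\<^sub>m d) S (- Sb) (w 1 \<cdot>\<^sub>m 1\<^sub>m d),
          four_block_mat (w 1 \<cdot>\<^sub>m 1\<^sub>m d) (- S) Sb (v 1 \<cdot>\<^sub>m 1\<^sub>m d)))"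

definition suslin :: "nat \<Rightarrow> (nat \<Rightarrow> 'a::comm_ring_1) \<Rightarrow> (nat \<Rightarrow> 'a) \<Rightarrow> 'a mat" where
  "suslin m v w = fst (suslin_pair m v w)"

definition suslin_bar :: "nat \<Rightarrow> (nat \<Rightarrow> 'a::comm_ring_1) \<Rightarrow> (nat \<Rightarrow> 'a) \<Rightarrow> 'a mat" where
  "suslin_bar m v w = snd (suslin_pair m v w)"

definition std_basis :: "nat \<Rightarrow> nat \<Rightarrow> 'a::comm_ring_1" where
  "std_basis i = (\<lambda>k. if k = i then 1 else 0)"

definition suslinE :: "nat \<Rightarrow> nat \<Rightarrow> 'a::comm_ring_1 mat" where
  "suslinE n i = suslin (n - 1) (std_basis i) (\<lambda>_. 0)"

definition suslinF :: "nat \<Rightarrow> nat \<Rightarrow> 'a::comm_ring_1 mat" where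
  "suslinF n i = suslin (n - 1) (\<lambda>_. 0) (std_basis i)"

text \<open>Two-sided inverse of a square matrix (meaningful when it exists).\<close>
definition mat_inv :: "'a::comm_ring_1 mat \<Rightarrow> 'a mat" where
  "mat_inv A = (SOME B. B \<in> carrier_mat (dim_row A) (dim_row A) \<and>
      A * B = 1\<^sub>m (dim_row A) \<and> B * A = 1\<^sub>m (dim_row A))"

definition mat_comm :: "'a::comm_ring_1 mat \<Rightarrow> 'a mat \<Rightarrow> 'a mat" where
  "mat_comm A B = A * B * mat_inv A * mat_inv B"

end

theory Submission
  imports Defs
begin


definition sh :: "(nat \<Rightarrow> 'a) \<Rightarrow> nat \<Rightarrow> 'a" where "sh v = (\<lambda>k. v (Suc k))"

lemma suslin_rec:
  "suslin (Suc m) v w = four_block_mat (v 1 \<cdot>\<^sub>m 1\<^sub>m (2^m)) (suslin m (sh v) (sh w)) (- suslin_bar m (sh v) (sh w)) (w 1 \<cdot>\<^sub>m 1\<^sub>m (2^m))"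
  "suslin_bar (Suc m) v w = four_block_mat (w 1 \<cdot>\<^sub>m 1\<^sub>m (2^m)) (- suslin m (sh v) (sh w)) (suslin_bar m (sh v) (sh w)) (v 1 \<cdot>\<^sub>m 1\<^sub>m (2^m))"
proof -
  have "suslin (Suc m) v w = four_block_mat (v 1 \<cdot>\<^sub>m 1\<^sub>m (2^m)) (suslin m (sh v) (sh w)) (- suslin_bar m (sh v) (sh w)) (w 1 \<cdot>\<^sub>m 1\<^sub>m (2^m)) \<and>
    suslin_bar (Suc m) v w = four_block_mat (w 1 \<cdot>\<^sub>m 1\<^sub>m (2^m)) (- suslin m (sh v) (sh w)) (suslin_bar m (sh v) (sh w)) (v 1 \<cdot>\<^sub>m 1\<^sub>m (2^m))"
  proof (cases m)
    case 0
    show ?thesis unfolding 0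
      apply (simp add: suslin_def suslin_bar_def sh_def mat_of_rows_list_def)
      apply (intro conjI eq_matI)
      apply (auto simp: less_Suc_eq numeral_2_eq_2)
      done
  next
    case (Suc k)
    then show ?thesis by (simp add: suslin_def suslin_bar_def sh_def Let_def)
  qed
  then show "suslin (Suc m) v w = four_block_mat (v 1 \<cdot>\<^sub>m 1\<^sub>m (2^m)) (suslin m (sh v) (sh w)) (- suslin_bar m (sh v) (sh w)) (w 1 \<cdot>\<^sub>m 1\<^sub>m (2^m))"
    "suslin_bar (Suc m) v w = four_block_mat (w 1 \<cdot>\<^sub>m 1\<^sub>m (2^m)) (- suslin m (sh v) (sh w)) (suslin_bar m (sh v) (sh w)) (v 1 \<cdot>\<^sub>m 1\<^sub>m (2^m))"
    by auto
qed


lemma suslin_carrier: "suslin m v w \<in> carrier_mat (2^m) (2^m) \<and> suslin_bar m v w \<in> carrier_mat (2^m) (2^m)"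
proof (induction m arbitrary: v w)
  case 0 then show ?case by (simp add: suslin_def suslin_bar_def)
next
  case (Suc m)
  have e: "(2::nat)^Suc m = 2^m + 2^m" by simp
  show ?case unfolding suslin_rec e
    using Suc[of "sh v" "sh w"] by auto
qed

lemma suslin_carr[simp]: "suslin m v w \<in> carrier_mat (2^m) (2^m)" "suslin_bar m v w \<in> carrier_mat (2^m) (2^m)"
  using suslin_carrier by auto


lemma sm1L[simp]: "A \<in> carrier_mat d n \<Longrightarrow> (a \<cdot>\<^sub>m 1\<^sub>m d) * A = a \<cdot>\<^sub>m (A :: 'a::comm_ring_1 mat)"
  by (rule eq_matI) auto
lemma sm1R[simp]: "A \<in> carrier_mat n d \<Longrightarrow> A * (a \<cdot>\<^sub>m 1\<^sub>m d) = a \<cdot>\<^sub>m (A :: 'a::comm_ring_1 mat)"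
  by (rule eq_matI) (auto simp: ac_simps)

lemma sm1L'[simp]: "A \<in> carrier_mat d d \<Longrightarrow> (a \<cdot>\<^sub>m 1\<^sub>m d) * A = a \<cdot>\<^sub>m (A :: 'a::comm_ring_1 mat)"
  by (rule sm1L)
lemma sm1R'[simp]: "A \<in> carrier_mat d d \<Longrightarrow> A * (a \<cdot>\<^sub>m 1\<^sub>m d) = a \<cdot>\<^sub>m (A :: 'a::comm_ring_1 mat)"
  by (rule sm1R)
lemma sm11[simp]: "(a \<cdot>\<^sub>m 1\<^sub>m d) * (b \<cdot>\<^sub>m 1\<^sub>m d) = (a * b) \<cdot>\<^sub>m (1\<^sub>m d :: 'a::comm_ring_1 mat)"
  by (rule eq_matI) auto
lemma negneg[simp]: "A \<in> carrier_mat d d \<Longrightarrow> B \<in> carrier_mat d d \<Longrightarrow> (-A) * (-B) = A * (B :: 'a::comm_ring_1 mat)"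
  by (rule eq_matI) auto

lemma smult_one_split: "(k::'a::comm_ring_1) \<cdot>\<^sub>m 1\<^sub>m (d+d) = four_block_mat (k \<cdot>\<^sub>m 1\<^sub>m d) (0\<^sub>m d d) (0\<^sub>m d d) (k \<cdot>\<^sub>m 1\<^sub>m d)"
  by (rule eq_matI) (auto simp: mult_zero_right)

lemma sq_carr: "A \<in> carrier_mat n n \<Longrightarrow> B \<in> carrier_mat n n \<Longrightarrow> A * B \<in> carrier_mat n n"
  "A \<in> carrier_mat n n \<Longrightarrow> B \<in> carrier_mat n n \<Longrightarrow> A + B \<in> carrier_mat n n"
  by auto

lemma mat_entry_eq: "X = Y \<Longrightarrow> X $$ (i,j) = Y $$ (i,j)" by simp

lemma step_pol:
  fixes T Tb T' Tb' :: "'a::comm_ring_1 mat"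
  assumes c: "T \<in> carrier_mat d d" "Tb \<in> carrier_mat d d" "T' \<in> carrier_mat d d" "Tb' \<in> carrier_mat d d"
  and h1: "T*Tb' + T'*Tb = k \<cdot>\<^sub>m 1\<^sub>m d" and h2: "Tb*T' + Tb'*T = k \<cdot>\<^sub>m 1\<^sub>m d"
  shows "four_block_mat (a \<cdot>\<^sub>m 1\<^sub>m d) T (-Tb) (b \<cdot>\<^sub>m 1\<^sub>m d) * four_block_mat (b' \<cdot>\<^sub>m 1\<^sub>m d) (-T') Tb' (a' \<cdot>\<^sub>m 1\<^sub>m d)
       + four_block_mat (a' \<cdot>\<^sub>m 1\<^sub>m d) T' (-Tb') (b' \<cdot>\<^sub>m 1\<^sub>m d) * four_block_mat (b \<cdot>\<^sub>m 1\<^sub>m d) (-T) Tb (a \<cdot>\<^sub>m 1\<^sub>m d)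
       = (a*b' + a'*b + k) \<cdot>\<^sub>m 1\<^sub>m (d+d)"
proof -
  have e1: "\<And>i j. i < d \<Longrightarrow> j < d \<Longrightarrow> (T*Tb') $$ (i,j) + (T'*Tb) $$ (i,j) = (if i = j then k else 0)"
  proof -
    fix i j assume ij: "i < d" "j < d"
    have "(T*Tb' + T'*Tb) $$ (i,j) = (k \<cdot>\<^sub>m 1\<^sub>m d) $$ (i,j)" using h1 by simp
    then show "(T*Tb') $$ (i,j) + (T'*Tb) $$ (i,j) = (if i = j then k else 0)"
      using c ij by (simp add: c[THEN carrier_matD(1)] c[THEN carrier_matD(2)] index_mult_mat(2,3) del: index_mult_mat(1))
  qed
  have e2: "\<And>i j. i < d \<Longrightarrow> j < d \<Longrightarrow> (Tb*T') $$ (i,j) + (Tb'*T) $$ (i,j) = (if i = j then k else 0)"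
  proof -
    fix i j assume ij: "i < d" "j < d"
    have "(Tb*T' + Tb'*T) $$ (i,j) = (k \<cdot>\<^sub>m 1\<^sub>m d) $$ (i,j)" using h2 by simp
    then show "(Tb*T') $$ (i,j) + (Tb'*T) $$ (i,j) = (if i = j then k else 0)"
      using c ij by (simp add: c[THEN carrier_matD(1)] c[THEN carrier_matD(2)] index_mult_mat(2,3) del: index_mult_mat(1))
  qed
    have cc: "\<And>a. (a::'a) \<cdot>\<^sub>m 1\<^sub>m d \<in> carrier_mat d d" by simp
    have nc: "-T \<in> carrier_mat d d" "-Tb \<in> carrier_mat d d" "-T' \<in> carrier_mat d d" "-Tb' \<in> carrier_mat d d"
      using c by auto
    have nn1: "(-Tb)*(-T') = Tb*T'" "(-Tb')*(-T) = Tb'*T" using c by auto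
    have nn2: "- Tb * - T' = Tb*T'" "- Tb' * - T = Tb'*T" using c by auto
    note m1 = mult_four_block_mat[OF cc c(1) nc(2) cc cc nc(3) c(4) cc]
    note m2 = mult_four_block_mat[OF cc c(3) nc(4) cc cc nc(1) c(2) cc]
    show ?thesis
    unfolding m1 m2
    apply (subst add_four_block_mat[where ?nr1.0=d and ?nc1.0=d and ?nc2.0=d and ?nr2.0=d])
    apply (simp_all add: c nc sq_carr)
    apply (unfold smult_one_split)
    apply (rule cong_four_block_mat)
    apply (simp_all add: c nc nn1 nn2)
    apply (rule eq_matI)
    subgoal for i j using e1[of i j] c by (simp add: c[THEN carrier_matD(1)] c[THEN carrier_matD(2)] index_mult_mat(2,3) algebra_simps del: index_mult_mat(1))
    apply (simp_all add: c[THEN carrier_matD(1)] c[THEN carrier_matD(2)])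
    apply (rule eq_matI)
    subgoal for i j using c by (simp add: c[THEN carrier_matD(1)] c[THEN carrier_matD(2)] index_mult_mat(2,3) algebra_simps del: index_mult_mat(1))
    apply (simp_all add: c[THEN carrier_matD(1)] c[THEN carrier_matD(2)])
    apply (rule eq_matI)
    subgoal for i j using c by (simp add: c[THEN carrier_matD(1)] c[THEN carrier_matD(2)] index_mult_mat(2,3) algebra_simps del: index_mult_mat(1))
    apply (simp_all add: c[THEN carrier_matD(1)] c[THEN carrier_matD(2)])
    apply (rule eq_matI)
    subgoal for i j using e2[of i j] c by (simp add: c[THEN carrier_matD(1)] c[THEN carrier_matD(2)] index_mult_mat(2,3) algebra_simps del: index_mult_mat(1))
    apply (simp_all add: c[THEN carrier_matD(1)] c[THEN carrier_matD(2)])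
    done
qed

lemma step_pol_bar:
  fixes T Tb T' Tb' :: "'a::comm_ring_1 mat"
  assumes c: "T \<in> carrier_mat d d" "Tb \<in> carrier_mat d d" "T' \<in> carrier_mat d d" "Tb' \<in> carrier_mat d d"
  and h1: "T*Tb' + T'*Tb = k \<cdot>\<^sub>m 1\<^sub>m d" and h2: "Tb*T' + Tb'*T = k \<cdot>\<^sub>m 1\<^sub>m d"
  shows "four_block_mat (b \<cdot>\<^sub>m 1\<^sub>m d) (-T) Tb (a \<cdot>\<^sub>m 1\<^sub>m d) * four_block_mat (a' \<cdot>\<^sub>m 1\<^sub>m d) T' (-Tb') (b' \<cdot>\<^sub>m 1\<^sub>m d)
       + four_block_mat (b' \<cdot>\<^sub>m 1\<^sub>m d) (-T') Tb' (a' \<cdot>\<^sub>m 1\<^sub>m d) * four_block_mat (a \<cdot>\<^sub>m 1\<^sub>m d) T (-Tb) (b \<cdot>\<^sub>m 1\<^sub>m d)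
       = (a*b' + a'*b + k) \<cdot>\<^sub>m 1\<^sub>m (d+d)"
proof -
  have e1: "\<And>i j. i < d \<Longrightarrow> j < d \<Longrightarrow> (T*Tb') $$ (i,j) + (T'*Tb) $$ (i,j) = (if i = j then k else 0)"
  proof -
    fix i j assume ij: "i < d" "j < d"
    have "(T*Tb' + T'*Tb) $$ (i,j) = (k \<cdot>\<^sub>m 1\<^sub>m d) $$ (i,j)" using h1 by simp
    then show "(T*Tb') $$ (i,j) + (T'*Tb) $$ (i,j) = (if i = j then k else 0)"
      using c ij by (simp add: c[THEN carrier_matD(1)] c[THEN carrier_matD(2)] index_mult_mat(2,3) del: index_mult_mat(1))
  qed
  have e2: "\<And>i j. i < d \<Longrightarrow> j < d \<Longrightarrow> (Tb*T') $$ (i,j) + (Tb'*T) $$ (i,j) = (if i = j then k else 0)"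
  proof -
    fix i j assume ij: "i < d" "j < d"
    have "(Tb*T' + Tb'*T) $$ (i,j) = (k \<cdot>\<^sub>m 1\<^sub>m d) $$ (i,j)" using h2 by simp
    then show "(Tb*T') $$ (i,j) + (Tb'*T) $$ (i,j) = (if i = j then k else 0)"
      using c ij by (simp add: c[THEN carrier_matD(1)] c[THEN carrier_matD(2)] index_mult_mat(2,3) del: index_mult_mat(1))
  qed
  have cc: "\<And>a. (a::'a) \<cdot>\<^sub>m 1\<^sub>m d \<in> carrier_mat d d" by simp
  have nc: "-T \<in> carrier_mat d d" "-Tb \<in> carrier_mat d d" "-T' \<in> carrier_mat d d" "-Tb' \<in> carrier_mat d d"
    using c by auto
  have nn: "(-T)*(-Tb') = T*Tb'" "(-T')*(-Tb) = T'*Tb" "(-Tb)*(-T') = Tb*T'" "(-Tb')*(-T) = Tb'*T"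
     "(-T)*(-Tb) = T*Tb" "(-Tb)*(-T) = Tb*T" using c by auto
  note m1 = mult_four_block_mat[OF cc nc(1) c(2) cc cc c(3) nc(4) cc]
  note m2 = mult_four_block_mat[OF cc nc(3) c(4) cc cc c(1) nc(2) cc]
  show ?thesis
    unfolding m1 m2
    apply (subst add_four_block_mat[where ?nr1.0=d and ?nc1.0=d and ?nc2.0=d and ?nr2.0=d])
    apply (simp_all add: c nc sq_carr)
    apply (unfold smult_one_split)
    apply (rule cong_four_block_mat)
    apply (simp_all add: c nc nn)
    apply (rule eq_matI)
    subgoal for i j using e1[of i j] e2[of i j] c by (simp add: c[THEN carrier_matD(1)] c[THEN carrier_matD(2)] index_mult_mat(2,3) algebra_simps del: index_mult_mat(1))
    apply (simp_all add: c[THEN carrier_matD(1)] c[THEN carrier_matD(2)])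
    apply (rule eq_matI)
    subgoal for i j using e1[of i j] e2[of i j] c by (simp add: c[THEN carrier_matD(1)] c[THEN carrier_matD(2)] index_mult_mat(2,3) algebra_simps del: index_mult_mat(1))
    apply (simp_all add: c[THEN carrier_matD(1)] c[THEN carrier_matD(2)])
    apply (rule eq_matI)
    subgoal for i j using e1[of i j] e2[of i j] c by (simp add: c[THEN carrier_matD(1)] c[THEN carrier_matD(2)] index_mult_mat(2,3) algebra_simps del: index_mult_mat(1))
    apply (simp_all add: c[THEN carrier_matD(1)] c[THEN carrier_matD(2)])
    apply (rule eq_matI)
    subgoal for i j using e1[of i j] e2[of i j] c by (simp add: c[THEN carrier_matD(1)] c[THEN carrier_matD(2)] index_mult_mat(2,3) algebra_simps del: index_mult_mat(1))
    apply (simp_all add: c[THEN carrier_matD(1)] c[THEN carrier_matD(2)])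
    done
qed

lemma step_sq:
  fixes T Tb T' Tb' :: "'a::comm_ring_1 mat"
  assumes c: "T \<in> carrier_mat d d" "Tb \<in> carrier_mat d d" "T' \<in> carrier_mat d d" "Tb' \<in> carrier_mat d d"
  and h1: "T*Tb = k \<cdot>\<^sub>m 1\<^sub>m d" and h2: "Tb*T = k \<cdot>\<^sub>m 1\<^sub>m d"
  shows "four_block_mat (a \<cdot>\<^sub>m 1\<^sub>m d) T (-Tb) (b \<cdot>\<^sub>m 1\<^sub>m d) * four_block_mat (b \<cdot>\<^sub>m 1\<^sub>m d) (-T) Tb (a \<cdot>\<^sub>m 1\<^sub>m d)
       = (a*b + k) \<cdot>\<^sub>m 1\<^sub>m (d+d)"
   "four_block_mat (b \<cdot>\<^sub>m 1\<^sub>m d) (-T) Tb (a \<cdot>\<^sub>m 1\<^sub>m d) * four_block_mat (a \<cdot>\<^sub>m 1\<^sub>m d) T (-Tb) (b \<cdot>\<^sub>m 1\<^sub>m d)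
       = (a*b + k) \<cdot>\<^sub>m 1\<^sub>m (d+d)"
proof -
  have e1: "\<And>i j. i < d \<Longrightarrow> j < d \<Longrightarrow> (T*Tb) $$ (i,j) = (if i = j then k else 0)"
  proof -
    fix i j assume ij: "i < d" "j < d"
    have "(T*Tb) $$ (i,j) = (k \<cdot>\<^sub>m 1\<^sub>m d) $$ (i,j)" using h1 by simp
    then show "(T*Tb) $$ (i,j) = (if i = j then k else 0)"
      using c ij by (simp add: c[THEN carrier_matD(1)] c[THEN carrier_matD(2)] index_mult_mat(2,3) del: index_mult_mat(1))
  qed
  have e2: "\<And>i j. i < d \<Longrightarrow> j < d \<Longrightarrow> (Tb*T) $$ (i,j) = (if i = j then k else 0)"
  proof -
    fix i j assume ij: "i < d" "j < d"
    have "(Tb*T) $$ (i,j) = (k \<cdot>\<^sub>m 1\<^sub>m d) $$ (i,j)" using h2 by simp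
    then show "(Tb*T) $$ (i,j) = (if i = j then k else 0)"
      using c ij by (simp add: c[THEN carrier_matD(1)] c[THEN carrier_matD(2)] index_mult_mat(2,3) del: index_mult_mat(1))
  qed
  have cc: "\<And>a. (a::'a) \<cdot>\<^sub>m 1\<^sub>m d \<in> carrier_mat d d" by simp
  have nc: "-T \<in> carrier_mat d d" "-Tb \<in> carrier_mat d d" "-T' \<in> carrier_mat d d" "-Tb' \<in> carrier_mat d d"
    using c by auto
  have nn: "(-T)*(-Tb') = T*Tb'" "(-T')*(-Tb) = T'*Tb" "(-Tb)*(-T') = Tb*T'" "(-Tb')*(-T) = Tb'*T"
     "(-T)*(-Tb) = T*Tb" "(-Tb)*(-T) = Tb*T" using c by auto
  note m1 = mult_four_block_mat[OF cc c(1) nc(2) cc cc nc(1) c(2) cc]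
  note m2 = mult_four_block_mat[OF cc nc(1) c(2) cc cc c(1) nc(2) cc]
  show "four_block_mat (a \<cdot>\<^sub>m 1\<^sub>m d) T (-Tb) (b \<cdot>\<^sub>m 1\<^sub>m d) * four_block_mat (b \<cdot>\<^sub>m 1\<^sub>m d) (-T) Tb (a \<cdot>\<^sub>m 1\<^sub>m d)
       = (a*b + k) \<cdot>\<^sub>m 1\<^sub>m (d+d)"
    unfolding m1
    apply (unfold smult_one_split)
    apply (rule cong_four_block_mat)
    apply (simp_all add: c nc nn)
    apply (rule eq_matI)
    subgoal for i j using e1[of i j] e2[of i j] c by (simp add: c[THEN carrier_matD(1)] c[THEN carrier_matD(2)] index_mult_mat(2,3) algebra_simps del: index_mult_mat(1))
    apply (simp_all add: c[THEN carrier_matD(1)] c[THEN carrier_matD(2)])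
    apply (rule eq_matI)
    subgoal for i j using e1[of i j] e2[of i j] c by (simp add: c[THEN carrier_matD(1)] c[THEN carrier_matD(2)] index_mult_mat(2,3) algebra_simps del: index_mult_mat(1))
    apply (simp_all add: c[THEN carrier_matD(1)] c[THEN carrier_matD(2)])
    apply (rule eq_matI)
    subgoal for i j using e1[of i j] e2[of i j] c by (simp add: c[THEN carrier_matD(1)] c[THEN carrier_matD(2)] index_mult_mat(2,3) algebra_simps del: index_mult_mat(1))
    apply (simp_all add: c[THEN carrier_matD(1)] c[THEN carrier_matD(2)])
    apply (rule eq_matI)
    subgoal for i j using e1[of i j] e2[of i j] c by (simp add: c[THEN carrier_matD(1)] c[THEN carrier_matD(2)] index_mult_mat(2,3) algebra_simps del: index_mult_mat(1))
    apply (simp_all add: c[THEN carrier_matD(1)] c[THEN carrier_matD(2)])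
    done
  show "four_block_mat (b \<cdot>\<^sub>m 1\<^sub>m d) (-T) Tb (a \<cdot>\<^sub>m 1\<^sub>m d) * four_block_mat (a \<cdot>\<^sub>m 1\<^sub>m d) T (-Tb) (b \<cdot>\<^sub>m 1\<^sub>m d)
       = (a*b + k) \<cdot>\<^sub>m 1\<^sub>m (d+d)"
    unfolding m2
    apply (unfold smult_one_split)
    apply (rule cong_four_block_mat)
    apply (simp_all add: c nc nn)
    apply (rule eq_matI)
    subgoal for i j using e1[of i j] e2[of i j] c by (simp add: c[THEN carrier_matD(1)] c[THEN carrier_matD(2)] index_mult_mat(2,3) algebra_simps del: index_mult_mat(1))
    apply (simp_all add: c[THEN carrier_matD(1)] c[THEN carrier_matD(2)])
    apply (rule eq_matI)
    subgoal for i j using e1[of i j] e2[of i j] c by (simp add: c[THEN carrier_matD(1)] c[THEN carrier_matD(2)] index_mult_mat(2,3) algebra_simps del: index_mult_mat(1))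
    apply (simp_all add: c[THEN carrier_matD(1)] c[THEN carrier_matD(2)])
    apply (rule eq_matI)
    subgoal for i j using e1[of i j] e2[of i j] c by (simp add: c[THEN carrier_matD(1)] c[THEN carrier_matD(2)] index_mult_mat(2,3) algebra_simps del: index_mult_mat(1))
    apply (simp_all add: c[THEN carrier_matD(1)] c[THEN carrier_matD(2)])
    apply (rule eq_matI)
    subgoal for i j using e1[of i j] e2[of i j] c by (simp add: c[THEN carrier_matD(1)] c[THEN carrier_matD(2)] index_mult_mat(2,3) algebra_simps del: index_mult_mat(1))
    apply (simp_all add: c[THEN carrier_matD(1)] c[THEN carrier_matD(2)])
    done
qed

definition ipr :: "nat \<Rightarrow> (nat \<Rightarrow> 'a::comm_ring_1) \<Rightarrow> (nat \<Rightarrow> 'a) \<Rightarrow> (nat \<Rightarrow> 'a) \<Rightarrow> (nat \<Rightarrow> 'a) \<Rightarrow> 'a" where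
  "ipr m v w v' w' = (\<Sum>k\<in>{1..Suc m}. v k * w' k + v' k * w k)"
definition sqr :: "nat \<Rightarrow> (nat \<Rightarrow> 'a::comm_ring_1) \<Rightarrow> (nat \<Rightarrow> 'a) \<Rightarrow> 'a" where
  "sqr m v w = (\<Sum>k\<in>{1..Suc m}. v k * w k)"

lemma sum_split_first: "(\<Sum>k\<in>{1..Suc (Suc m)}. f k) = f 1 + (\<Sum>k\<in>{1..Suc m}. f (Suc k))"
  by (induction m) (simp_all add: ac_simps)

lemma ipr_Suc: "ipr (Suc m) v w v' w' = v 1 * w' 1 + v' 1 * w 1 + ipr m (sh v) (sh w) (sh v') (sh w')"
  unfolding ipr_def sh_def by (subst sum_split_first) simp
lemma sqr_Suc: "sqr (Suc m) v w = v 1 * w 1 + sqr m (sh v) (sh w)"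
  unfolding sqr_def sh_def by (subst sum_split_first) simp

lemma two_pow_Suc: "(2::nat)^Suc m = 2^m + 2^m" by simp

lemma suslin_ids:
  "suslin m v w * suslin_bar m v' w' + suslin m v' w' * suslin_bar m v w = ipr m v w v' w' \<cdot>\<^sub>m 1\<^sub>m (2^m) \<and>
   suslin_bar m v w * suslin m v' w' + suslin_bar m v' w' * suslin m v w = ipr m v w v' w' \<cdot>\<^sub>m 1\<^sub>m (2^m) \<and>
   suslin m v w * suslin_bar m v w = sqr m v w \<cdot>\<^sub>m 1\<^sub>m (2^m) \<and>
   suslin_bar m v w * suslin m v w = sqr m v w \<cdot>\<^sub>m 1\<^sub>m (2^m)"
proof (induction m arbitrary: v w v' w')
  case 0
  show ?case
    by (auto intro!: eq_matI simp: suslin_def suslin_bar_def ipr_def sqr_def scalar_prod_def algebra_simps)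
next
  case (Suc m)
  note ih1 = Suc[of "sh v" "sh w" "sh v'" "sh w'"]
  have "ipr (Suc m) v w v' w' = v 1 * w' 1 + v' 1 * w 1 + ipr m (sh v) (sh w) (sh v') (sh w')" by (rule ipr_Suc)
  show ?case
    unfolding suslin_rec two_pow_Suc ipr_Suc sqr_Suc
    apply (intro conjI)
    apply (rule step_pol; (simp add: ih1)?)
    apply (rule step_pol_bar; (simp add: ih1)?)
    apply (rule step_sq(1)[where T'="suslin m (sh v) (sh w)" and Tb'="suslin_bar m (sh v) (sh w)"]; (simp add: ih1)?)
    apply (rule step_sq(2)[where T'="suslin m (sh v) (sh w)" and Tb'="suslin_bar m (sh v) (sh w)"]; (simp add: ih1)?)
    done
qed


lemma Lsl: "dim_col A = dim_row B \<Longrightarrow> (k \<cdot>\<^sub>m A) * B = k \<cdot>\<^sub>m (A * B :: 'a::comm_ring_1 mat)"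
  by (rule eq_matI) auto
lemma Lsr: "dim_col A = dim_row B \<Longrightarrow> A * (k \<cdot>\<^sub>m B) = k \<cdot>\<^sub>m (A * B :: 'a::comm_ring_1 mat)"
  by (rule eq_matI) auto
lemma Lzl: "dim_row A = n \<Longrightarrow> dim_col A = m \<Longrightarrow> 0\<^sub>m n m + A = (A :: 'a::comm_ring_1 mat)"
  by (rule eq_matI) auto
lemma Lzr: "dim_row A = n \<Longrightarrow> dim_col A = m \<Longrightarrow> A + 0\<^sub>m n m = (A :: 'a::comm_ring_1 mat)"
  by (rule eq_matI) auto
lemma Ldl: assumes "dim_row A = dim_row B" "dim_col A = dim_col B" "dim_col B = dim_row C" shows "(A + B) * C = A * C + B * (C :: 'a::comm_ring_1 mat)"
proof (rule add_mult_distrib_mat)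
  show "A \<in> carrier_mat (dim_row A) (dim_col A)" unfolding carrier_mat_def by blast
  show "B \<in> carrier_mat (dim_row A) (dim_col A)" unfolding carrier_mat_def using assms by simp
  show "C \<in> carrier_mat (dim_col A) (dim_col C)" unfolding carrier_mat_def using assms by simp
qed
lemma Ldr: assumes "dim_row B = dim_row C" "dim_col B = dim_col C" "dim_col A = dim_row B" shows "A * (B + C) = A * B + A * (C :: 'a::comm_ring_1 mat)"
proof (rule mult_add_distrib_mat)
  show "A \<in> carrier_mat (dim_row A) (dim_col A)" unfolding carrier_mat_def by blast
  show "B \<in> carrier_mat (dim_col A) (dim_col B)" unfolding carrier_mat_def using assms by simp
  show "C \<in> carrier_mat (dim_col A) (dim_col B)" unfolding carrier_mat_def using assms by simp
qed
lemma Las: assumes "dim_col A = dim_row B" "dim_col B = dim_row C" shows "(A * B) * C = A * (B * (C :: 'a::comm_ring_1 mat))"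
proof (rule assoc_mult_mat)
  show "A \<in> carrier_mat (dim_row A) (dim_col A)" unfolding carrier_mat_def by blast
  show "B \<in> carrier_mat (dim_col A) (dim_col B)" unfolding carrier_mat_def using assms by simp
  show "C \<in> carrier_mat (dim_col B) (dim_col C)" unfolding carrier_mat_def using assms by simp
qed
lemma Lss: "k \<cdot>\<^sub>m (l \<cdot>\<^sub>m A) = (k * l) \<cdot>\<^sub>m (A :: 'a::comm_ring_1 mat)"
  by (rule eq_matI) auto

lemma bm: "A1 \<in> carrier_mat d d \<Longrightarrow> B1 \<in> carrier_mat d d \<Longrightarrow> C1 \<in> carrier_mat d d \<Longrightarrow> D1 \<in> carrier_mat d d \<Longrightarrow>
  A2 \<in> carrier_mat d d \<Longrightarrow> B2 \<in> carrier_mat d d \<Longrightarrow> C2 \<in> carrier_mat d d \<Longrightarrow> D2 \<in> carrier_mat d d \<Longrightarrow>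
  four_block_mat A1 B1 C1 D1 * four_block_mat A2 B2 C2 D2
  = four_block_mat (A1 * A2 + B1 * C2) (A1 * B2 + B1 * D2) (C1 * A2 + D1 * C2) (C1 * B2 + D1 * D2)"
  by (rule mult_four_block_mat)

lemma ba: "A1 \<in> carrier_mat d d \<Longrightarrow> B1 \<in> carrier_mat d d \<Longrightarrow> C1 \<in> carrier_mat d d \<Longrightarrow> D1 \<in> carrier_mat d d \<Longrightarrow>
  A2 \<in> carrier_mat d d \<Longrightarrow> B2 \<in> carrier_mat d d \<Longrightarrow> C2 \<in> carrier_mat d d \<Longrightarrow> D2 \<in> carrier_mat d d \<Longrightarrow>
  four_block_mat A1 B1 C1 D1 + four_block_mat A2 B2 C2 D2
  = four_block_mat (A1 + A2) (B1 + B2) (C1 + C2) (D1 + D2)"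
  by (rule add_four_block_mat)

lemma bs: "A \<in> carrier_mat d d \<Longrightarrow> B \<in> carrier_mat d d \<Longrightarrow> C \<in> carrier_mat d d \<Longrightarrow> D \<in> carrier_mat d d \<Longrightarrow>
  k \<cdot>\<^sub>m four_block_mat A B C D = four_block_mat (k \<cdot>\<^sub>m A) (k \<cdot>\<^sub>m B) (k \<cdot>\<^sub>m C) (k \<cdot>\<^sub>m (D :: 'a::comm_ring_1 mat))"
  by (rule smult_four_block_mat)

lemma one_split: "1\<^sub>m (d+d) = four_block_mat (1\<^sub>m d) (0\<^sub>m d d) (0\<^sub>m d d) (1\<^sub>m d :: 'a::comm_ring_1 mat)"
  by simp

lemma mat_inv_eq:
  assumes "A \<in> carrier_mat N N" "B \<in> carrier_mat N N" "A * B = 1\<^sub>m N" "B * A = 1\<^sub>m N"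
  shows "mat_inv A = (B :: 'a::comm_ring_1 mat)"
proof -
  have dA: "dim_row A = N" using assms by auto
  have ex: "\<exists>B. B \<in> carrier_mat (dim_row A) (dim_row A) \<and> A * B = 1\<^sub>m (dim_row A) \<and> B * A = 1\<^sub>m (dim_row A)"
    using assms dA by auto
  define B' where "B' = mat_inv A"
  have B': "B' \<in> carrier_mat N N" "A * B' = 1\<^sub>m N" "B' * A = 1\<^sub>m N"
    using someI_ex[OF ex] unfolding B'_def mat_inv_def dA by auto
  have "B' = B' * (A * B)" using assms B' by simp
  also have "\<dots> = (B' * A) * B" by (rule sym[OF assoc_mult_mat[OF B'(1) assms(1) assms(2)]])
  also have "\<dots> = B" using assms B' by simp
  finally show ?thesis unfolding B'_def .
qed

lemmas bsimps = carrier_mat_def mem_Collect_eq left_mult_zero_mat' right_mult_zero_mat' left_mult_one_mat' right_mult_one_mat'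
  index_zero_mat(2,3) index_one_mat(2,3) Lzl Lzr smult_zero_mat index_smult_mat(2,3) index_add_mat(2,3) index_mult_mat(2,3)
  index_uminus_mat(2,3) Lsl Lsr Lss simp_thms

lemma top_E:
  fixes A B C D :: "'a::comm_ring_1 mat"
  assumes cA: "A \<in> carrier_mat d d" and cB: "B \<in> carrier_mat d d" and cC: "C \<in> carrier_mat d d" and cD: "D \<in> carrier_mat d d"
  and r1: "C * (B * C) = 0\<^sub>m d d" and r2: "B * (C * B) = 0\<^sub>m d d" and r3: "A * D + C * B = 0\<^sub>m d d"
  shows "1\<^sub>m (d+d) + c \<cdot>\<^sub>m (four_block_mat (0\<^sub>m d d) A B (0\<^sub>m d d) * four_block_mat (0\<^sub>m d d) C D (0\<^sub>m d d)) =
    mat_comm (1\<^sub>m (d+d) + c \<cdot>\<^sub>m (four_block_mat (0\<^sub>m d d) A B (0\<^sub>m d d) * four_block_mat (1\<^sub>m d) (0\<^sub>m d d) (0\<^sub>m d d) (0\<^sub>m d d)))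
             (1\<^sub>m (d+d) + four_block_mat (1\<^sub>m d) (0\<^sub>m d d) (0\<^sub>m d d) (0\<^sub>m d d) * four_block_mat (0\<^sub>m d d) C D (0\<^sub>m d d))"
proof -
  have dims[simp]: "dim_row A = d" "dim_col A = d" "dim_row B = d" "dim_col B = d"
    "dim_row C = d" "dim_col C = d" "dim_row D = d" "dim_col D = d" using cA cB cC cD by auto
  note cs = carrier_mat_def
  define U where "U = four_block_mat (1\<^sub>m d) (0\<^sub>m d d) (c \<cdot>\<^sub>m B) (1\<^sub>m d)"
  define U' where "U' = four_block_mat (1\<^sub>m d) (0\<^sub>m d d) ((-c) \<cdot>\<^sub>m B) (1\<^sub>m d)"
  define V where "V = four_block_mat (1\<^sub>m d) C (0\<^sub>m d d) (1\<^sub>m d)"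
  define V' where "V' = four_block_mat (1\<^sub>m d) ((-1) \<cdot>\<^sub>m C) (0\<^sub>m d d) (1\<^sub>m d)"
  have e1: "1\<^sub>m (d+d) + c \<cdot>\<^sub>m (four_block_mat (0\<^sub>m d d) A B (0\<^sub>m d d) * four_block_mat (1\<^sub>m d) (0\<^sub>m d d) (0\<^sub>m d d) (0\<^sub>m d d)) = U"
    unfolding U_def one_split
    apply (subst bm[where d=d])
    apply (simp_all only: bsimps dims)
    apply (subst bs[where d=d])
    apply (simp_all only: bsimps dims)
    apply (subst ba[where d=d])
    apply (simp_all only: bsimps dims)
    done
  have e2: "1\<^sub>m (d+d) + four_block_mat (1\<^sub>m d) (0\<^sub>m d d) (0\<^sub>m d d) (0\<^sub>m d d) * four_block_mat (0\<^sub>m d d) C D (0\<^sub>m d d) = V"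
    unfolding V_def one_split
    apply (subst bm[where d=d])
    apply (simp_all only: bsimps dims)
    apply (subst ba[where d=d])
    apply (simp_all only: bsimps dims)
    done
  have e3: "1\<^sub>m (d+d) + c \<cdot>\<^sub>m (four_block_mat (0\<^sub>m d d) A B (0\<^sub>m d d) * four_block_mat (0\<^sub>m d d) C D (0\<^sub>m d d))
     = four_block_mat (1\<^sub>m d + c \<cdot>\<^sub>m (A * D)) (0\<^sub>m d d) (0\<^sub>m d d) (1\<^sub>m d + c \<cdot>\<^sub>m (B * C))"
    unfolding one_split
    apply (subst bm[where d=d])
    apply (simp_all only: bsimps dims)
    apply (subst bs[where d=d])
    apply (simp_all only: bsimps dims)
    apply (subst ba[where d=d])
    apply (simp_all only: bsimps dims)
    done
  have i1: "U * U' = 1\<^sub>m (d+d)" unfolding U_def U'_def one_split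
    apply (subst bm[where d=d])
    apply (simp_all only: bsimps dims)
    apply (rule cong_four_block_mat, simp_all)
    apply (rule eq_matI, auto)
    done
  have i2: "U' * U = 1\<^sub>m (d+d)" unfolding U_def U'_def one_split
    apply (subst bm[where d=d])
    apply (simp_all only: bsimps dims)
    apply (rule cong_four_block_mat, simp_all)
    apply (rule eq_matI, auto)
    done
  have i3: "V * V' = 1\<^sub>m (d+d)" unfolding V_def V'_def one_split
    apply (subst bm[where d=d])
    apply (simp_all only: bsimps dims)
    apply (rule cong_four_block_mat, simp_all)
    apply (rule eq_matI, auto)
    done
  have i4: "V' * V = 1\<^sub>m (d+d)" unfolding V_def V'_def one_split
    apply (subst bm[where d=d])
    apply (simp_all only: bsimps dims)
    apply (rule cong_four_block_mat, simp_all)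
    apply (rule eq_matI, auto)
    done
  have cU: "U \<in> carrier_mat (d+d) (d+d)" "U' \<in> carrier_mat (d+d) (d+d)" "V \<in> carrier_mat (d+d) (d+d)" "V' \<in> carrier_mat (d+d) (d+d)"
    unfolding U_def U'_def V_def V'_def by (rule four_block_carrier_mat; simp)+
  have invU: "mat_inv U = U'" by (rule mat_inv_eq[OF cU(1,2) i1 i2])
  have invV: "mat_inv V = V'" by (rule mat_inv_eq[OF cU(3,4) i3 i4])
  have p1: "U * V = four_block_mat (1\<^sub>m d) C (c \<cdot>\<^sub>m B) (c \<cdot>\<^sub>m (B * C) + 1\<^sub>m d)"
    unfolding U_def V_def
    apply (subst bm[where d=d])
    apply (simp_all only: bsimps dims)
    done
  have p2: "four_block_mat (1\<^sub>m d) C (c \<cdot>\<^sub>m B) (c \<cdot>\<^sub>m (B * C) + 1\<^sub>m d) * U' =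
     four_block_mat (1\<^sub>m d + (-c) \<cdot>\<^sub>m (C * B)) C (0\<^sub>m d d) (c \<cdot>\<^sub>m (B * C) + 1\<^sub>m d)"
    unfolding U'_def
    apply (subst bm[where d=d])
    apply (simp_all only: bsimps dims)
    apply (rule cong_four_block_mat)
    apply (simp_all only: bsimps dims Ldl Las r1 r2)
    apply (rule eq_matI; simp add: dims)
    done
  have p3: "four_block_mat (1\<^sub>m d + (-c) \<cdot>\<^sub>m (C * B)) C (0\<^sub>m d d) (c \<cdot>\<^sub>m (B * C) + 1\<^sub>m d) * V' =
     four_block_mat (1\<^sub>m d + (-c) \<cdot>\<^sub>m (C * B)) (0\<^sub>m d d) (0\<^sub>m d d) (c \<cdot>\<^sub>m (B * C) + 1\<^sub>m d)"
    unfolding V'_def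
    apply (subst bm[where d=d])
    apply (simp_all only: bsimps dims)
    apply (rule cong_four_block_mat)
    apply (simp_all only: bsimps dims Ldl Las r1 r2)
    apply (rule eq_matI; simp add: dims)
    done
  have r3e: "(A * D) $$ (i,j) + (C * B) $$ (i,j) = 0" if "i < d" "j < d" for i j
  proof -
    have "(A * D + C * B) $$ (i,j) = 0\<^sub>m d d $$ (i,j)" using r3 by simp
    then show ?thesis using that by (simp add: dims index_mult_mat(2,3) del: index_mult_mat(1))
  qed
  show ?thesis
    unfolding mat_comm_def e1 e2 invU invV p1 p2 p3 e3
    apply (rule cong_four_block_mat)
    apply (simp_all only: bsimps dims)
    apply (rule eq_matI)
    subgoal for i j using r3e[of i j] apply (simp add: dims index_mult_mat(2,3) algebra_simps del: index_mult_mat(1))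
      by (metis distrib_left mult_zero_right)
    apply (simp add: dims)
    apply (simp add: dims)
    apply (rule eq_matI; simp add: dims)
    done
qed

lemma top_F:
  fixes A B C D :: "'a::comm_ring_1 mat"
  assumes cA: "A \<in> carrier_mat d d" and cB: "B \<in> carrier_mat d d" and cC: "C \<in> carrier_mat d d" and cD: "D \<in> carrier_mat d d"
  and r1: "D * (A * D) = 0\<^sub>m d d" and r2: "A * (D * A) = 0\<^sub>m d d" and r3: "D * A + B * C = 0\<^sub>m d d"
  shows "1\<^sub>m (d+d) + c \<cdot>\<^sub>m (four_block_mat (0\<^sub>m d d) A B (0\<^sub>m d d) * four_block_mat (0\<^sub>m d d) C D (0\<^sub>m d d)) =
    mat_comm (1\<^sub>m (d+d) + c \<cdot>\<^sub>m (four_block_mat (0\<^sub>m d d) A B (0\<^sub>m d d) * four_block_mat (0\<^sub>m d d) (0\<^sub>m d d) (0\<^sub>m d d) (1\<^sub>m d)))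
             (1\<^sub>m (d+d) + four_block_mat (0\<^sub>m d d) (0\<^sub>m d d) (0\<^sub>m d d) (1\<^sub>m d) * four_block_mat (0\<^sub>m d d) C D (0\<^sub>m d d))"
proof -
  have dims[simp]: "dim_row A = d" "dim_col A = d" "dim_row B = d" "dim_col B = d"
    "dim_row C = d" "dim_col C = d" "dim_row D = d" "dim_col D = d" using cA cB cC cD by auto
  define U where "U = four_block_mat (1\<^sub>m d) (c \<cdot>\<^sub>m A) (0\<^sub>m d d) (1\<^sub>m d)"
  define U' where "U' = four_block_mat (1\<^sub>m d) ((-c) \<cdot>\<^sub>m A) (0\<^sub>m d d) (1\<^sub>m d)"
  define V where "V = four_block_mat (1\<^sub>m d) (0\<^sub>m d d) D (1\<^sub>m d)"
  define V' where "V' = four_block_mat (1\<^sub>m d) (0\<^sub>m d d) ((-1) \<cdot>\<^sub>m D) (1\<^sub>m d)"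
  have e1: "1\<^sub>m (d+d) + c \<cdot>\<^sub>m (four_block_mat (0\<^sub>m d d) A B (0\<^sub>m d d) * four_block_mat (0\<^sub>m d d) (0\<^sub>m d d) (0\<^sub>m d d) (1\<^sub>m d)) = U"
    unfolding U_def one_split
    apply (subst bm[where d=d])
    apply (simp_all only: bsimps dims)
    apply (subst bs[where d=d])
    apply (simp_all only: bsimps dims)
    apply (subst ba[where d=d])
    apply (simp_all only: bsimps dims)
    done
  have e2: "1\<^sub>m (d+d) + four_block_mat (0\<^sub>m d d) (0\<^sub>m d d) (0\<^sub>m d d) (1\<^sub>m d) * four_block_mat (0\<^sub>m d d) C D (0\<^sub>m d d) = V"
    unfolding V_def one_split
    apply (subst bm[where d=d])
    apply (simp_all only: bsimps dims)
    apply (subst ba[where d=d])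
    apply (simp_all only: bsimps dims)
    done
  have e3: "1\<^sub>m (d+d) + c \<cdot>\<^sub>m (four_block_mat (0\<^sub>m d d) A B (0\<^sub>m d d) * four_block_mat (0\<^sub>m d d) C D (0\<^sub>m d d))
     = four_block_mat (1\<^sub>m d + c \<cdot>\<^sub>m (A * D)) (0\<^sub>m d d) (0\<^sub>m d d) (1\<^sub>m d + c \<cdot>\<^sub>m (B * C))"
    unfolding one_split
    apply (subst bm[where d=d])
    apply (simp_all only: bsimps dims)
    apply (subst bs[where d=d])
    apply (simp_all only: bsimps dims)
    apply (subst ba[where d=d])
    apply (simp_all only: bsimps dims)
    done
  have i1: "U * U' = 1\<^sub>m (d+d)" unfolding U_def U'_def V_def V'_def one_split
    apply (subst bm[where d=d])
    apply (simp_all only: bsimps dims)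
    apply (rule cong_four_block_mat, simp_all)
    apply (rule eq_matI, auto)
    done
  have i2: "U' * U = 1\<^sub>m (d+d)" unfolding U_def U'_def V_def V'_def one_split
    apply (subst bm[where d=d])
    apply (simp_all only: bsimps dims)
    apply (rule cong_four_block_mat, simp_all)
    apply (rule eq_matI, auto)
    done
  have i3: "V * V' = 1\<^sub>m (d+d)" unfolding U_def U'_def V_def V'_def one_split
    apply (subst bm[where d=d])
    apply (simp_all only: bsimps dims)
    apply (rule cong_four_block_mat, simp_all)
    apply (rule eq_matI, auto)
    done
  have i4: "V' * V = 1\<^sub>m (d+d)" unfolding U_def U'_def V_def V'_def one_split
    apply (subst bm[where d=d])
    apply (simp_all only: bsimps dims)
    apply (rule cong_four_block_mat, simp_all)
    apply (rule eq_matI, auto)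
    done
  have cU: "U \<in> carrier_mat (d+d) (d+d)" "U' \<in> carrier_mat (d+d) (d+d)" "V \<in> carrier_mat (d+d) (d+d)" "V' \<in> carrier_mat (d+d) (d+d)"
    unfolding U_def U'_def V_def V'_def by (rule four_block_carrier_mat; simp)+
  have invU: "mat_inv U = U'" by (rule mat_inv_eq[OF cU(1,2) i1 i2])
  have invV: "mat_inv V = V'" by (rule mat_inv_eq[OF cU(3,4) i3 i4])
  have p1: "U * V = four_block_mat (1\<^sub>m d + c \<cdot>\<^sub>m (A * D)) (c \<cdot>\<^sub>m A) D (1\<^sub>m d)"
    unfolding U_def V_def
    apply (subst bm[where d=d])
    apply (simp_all only: bsimps dims)
    done
  have p2: "four_block_mat (1\<^sub>m d + c \<cdot>\<^sub>m (A * D)) (c \<cdot>\<^sub>m A) D (1\<^sub>m d) * U' =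
     four_block_mat (1\<^sub>m d + c \<cdot>\<^sub>m (A * D)) (0\<^sub>m d d) D (1\<^sub>m d + (-c) \<cdot>\<^sub>m (D * A))"
    unfolding U'_def
    apply (subst bm[where d=d])
    apply (simp_all only: bsimps dims)
    apply (rule cong_four_block_mat)
    apply (simp_all only: bsimps dims Ldl Las r1 r2)
    apply (rule eq_matI; simp add: dims)
    apply (rule comm_add_mat[of _ d d]; simp only: bsimps dims)
    done
  have p3: "four_block_mat (1\<^sub>m d + c \<cdot>\<^sub>m (A * D)) (0\<^sub>m d d) D (1\<^sub>m d + (-c) \<cdot>\<^sub>m (D * A)) * V' =
     four_block_mat (1\<^sub>m d + c \<cdot>\<^sub>m (A * D)) (0\<^sub>m d d) (0\<^sub>m d d) (1\<^sub>m d + (-c) \<cdot>\<^sub>m (D * A))"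
    unfolding V'_def
    apply (subst bm[where d=d])
    apply (simp_all only: bsimps dims)
    apply (rule cong_four_block_mat)
    apply (simp_all only: bsimps dims Ldl Las r1 r2)
    apply (rule eq_matI; simp add: dims)
    done
  have r3e: "(D * A) $$ (i,j) + (B * C) $$ (i,j) = 0" if "i < d" "j < d" for i j
  proof -
    have "(D * A + B * C) $$ (i,j) = 0\<^sub>m d d $$ (i,j)" using r3 by simp
    then show ?thesis using that by (simp add: dims index_mult_mat(2,3) del: index_mult_mat(1))
  qed
  show ?thesis
    unfolding mat_comm_def e1 e2 invU invV p1 p2 p3 e3
    apply (rule cong_four_block_mat)
    apply (simp_all only: bsimps dims)
    apply (rule eq_matI)
    subgoal for i j using r3e[of i j] apply (simp add: dims index_mult_mat(2,3) algebra_simps del: index_mult_mat(1))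
      by (metis add.commute add_left_cancel minus_unique mult_minus_right distrib_left mult_zero_right)
    apply (simp_all add: dims)
    done
qed



lemma uminus_zero_sq[simp]: "- 0\<^sub>m n m = (0\<^sub>m n m :: 'a::comm_ring_1 mat)"
  by (rule eq_matI) auto

lemma neg_of_sum: "X \<in> carrier_mat d d \<Longrightarrow> Y \<in> carrier_mat d d \<Longrightarrow> X + Y = 0\<^sub>m d d \<Longrightarrow> Y = - (X :: 'a::comm_ring_1 mat)"
proof (rule eq_matI)
  fix i j assume a: "X \<in> carrier_mat d d" "Y \<in> carrier_mat d d" "X + Y = 0\<^sub>m d d" and ij: "i < dim_row (- X)" "j < dim_col (- X)"
  have "(X + Y) $$ (i,j) = 0\<^sub>m d d $$ (i,j)" using a by simp
  moreover have "dim_row X = d" "dim_col X = d" "dim_row Y = d" "dim_col Y = d" using a by auto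
  ultimately show "Y $$ (i,j) = (- X) $$ (i,j)" using ij by (simp add: add_eq_0_iff)
qed auto

lemma rels:
  fixes P Pb Q Qb :: "'a::comm_ring_1 mat"
  assumes c: "P \<in> carrier_mat d d" "Pb \<in> carrier_mat d d" "Q \<in> carrier_mat d d" "Qb \<in> carrier_mat d d"
  and h1: "P*Qb + Q*Pb = 0\<^sub>m d d" and h2: "Pb*Q + Qb*P = 0\<^sub>m d d"
  and s: "Pb*P = 0\<^sub>m d d" "P*Pb = 0\<^sub>m d d" "Q*Qb = 0\<^sub>m d d" "Qb*Q = 0\<^sub>m d d"
  shows "Q * (- Pb * Q) = 0\<^sub>m d d" "- Pb * (Q * - Pb) = 0\<^sub>m d d" "P * - Qb + Q * - Pb = 0\<^sub>m d d"
    "- Qb * (P * - Qb) = 0\<^sub>m d d" "P * (- Qb * P) = 0\<^sub>m d d" "- Qb * P + - Pb * Q = 0\<^sub>m d d"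
proof -
  have g1: "Q*Pb = - (P*Qb)" by (rule neg_of_sum[OF _ _ h1]) (use c in auto)
  have g2: "Qb*P = - (Pb*Q)" by (rule neg_of_sum[OF _ _ h2]) (use c in auto)
  have a1: "Q * (Pb * Q) = 0\<^sub>m d d"
  proof -
    have "Q * (Pb * Q) = (Q * Pb) * Q" using c by (simp add: assoc_mult_mat[of _ d d _ d _ d])
    also have "\<dots> = - (P * (Qb * Q))" unfolding g1 using c by (simp add: assoc_mult_mat[of _ d d _ d _ d])
    also have "\<dots> = 0\<^sub>m d d" using s c by simp
    finally show ?thesis .
  qed
  have a2: "Pb * (Q * Pb) = 0\<^sub>m d d"
  proof -
    have "Pb * (Q * Pb) = - ((Pb * P) * Qb)" unfolding g1 using c by (simp add: assoc_mult_mat[of _ d d _ d _ d])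
    also have "\<dots> = 0\<^sub>m d d" using s c by simp
    finally show ?thesis .
  qed
  have a3: "Qb * (P * Qb) = 0\<^sub>m d d"
  proof -
    have "Qb * (P * Qb) = (Qb * P) * Qb" using c by (simp add: assoc_mult_mat[of _ d d _ d _ d])
    also have "\<dots> = - (Pb * (Q * Qb))" unfolding g2 using c by (simp add: assoc_mult_mat[of _ d d _ d _ d])
    also have "\<dots> = 0\<^sub>m d d" using s c by simp
    finally show ?thesis .
  qed
  have a4: "P * (Qb * P) = 0\<^sub>m d d"
  proof -
    have "P * (Qb * P) = - ((P * Pb) * Q)" unfolding g2 using c by (simp add: assoc_mult_mat[of _ d d _ d _ d])
    also have "\<dots> = 0\<^sub>m d d" using s c by simp
    finally show ?thesis .
  qed
  show "Q * (- Pb * Q) = 0\<^sub>m d d" using a1 c by simp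
  show "- Pb * (Q * - Pb) = 0\<^sub>m d d" using a2 c by simp
  show "- Qb * (P * - Qb) = 0\<^sub>m d d" using a3 c by simp
  show "P * (- Qb * P) = 0\<^sub>m d d" using a4 c by simp
  show "P * - Qb + Q * - Pb = 0\<^sub>m d d"
  proof -
    have "P * - Qb + Q * - Pb = - (P * Qb + Q * Pb)" using c by (intro eq_matI) auto
    then show ?thesis using h1 by simp
  qed
  show "- Qb * P + - Pb * Q = 0\<^sub>m d d"
  proof -
    have "- Qb * P + - Pb * Q = - (Pb * Q + Qb * P)" using c by (intro eq_matI) auto
    then show ?thesis using h2 by simp
  qed
qed



lemma suslin_zero: "(\<forall>k\<ge>1. v k = 0 \<and> w k = 0) \<Longrightarrow>
  suslin m v w = 0\<^sub>m (2^m) (2^m) \<and> suslin_bar m v w = (0\<^sub>m (2^m) (2^m) :: 'a::comm_ring_1 mat)"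
proof (induction m arbitrary: v w)
  case 0
  then show ?case by (auto intro!: eq_matI simp: suslin_def suslin_bar_def)
next
  case (Suc m)
  have "\<forall>k\<ge>1. sh v k = 0 \<and> sh w k = 0" using Suc.prems by (simp add: sh_def)
  then have ih: "suslin m (sh v) (sh w) = 0\<^sub>m (2^m) (2^m)" "suslin_bar m (sh v) (sh w) = 0\<^sub>m (2^m) (2^m)"
    using Suc.IH by auto
  have v1: "v 1 = 0" "w 1 = 0" using Suc.prems by auto
  show ?case unfolding suslin_rec ih v1 two_pow_Suc
    by (auto intro!: eq_matI)
qed

lemma sh_zero[simp]: "sh (\<lambda>_. 0) = (\<lambda>_. 0)" by (simp add: sh_def)
lemma sh_std: "k \<ge> 1 \<Longrightarrow> sh (std_basis k) = std_basis (k - 1)"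
  by (auto simp: sh_def std_basis_def fun_eq_iff)

lemma ipr_zero_EE: "ipr m (std_basis a) (\<lambda>_. 0) (std_basis b) (\<lambda>_. 0) = 0" by (simp add: ipr_def)
lemma ipr_zero_FF: "ipr m (\<lambda>_. 0) (std_basis a) (\<lambda>_. 0) (std_basis b) = 0" by (simp add: ipr_def)
lemma ipr_zero_EF: "a \<noteq> b \<Longrightarrow> ipr m (std_basis a) (\<lambda>_. 0) (\<lambda>_. 0) (std_basis b) = 0"
  unfolding ipr_def std_basis_def by (rule sum.neutral) auto
lemma ipr_zero_FE: "a \<noteq> b \<Longrightarrow> ipr m (\<lambda>_. 0) (std_basis a) (std_basis b) (\<lambda>_. 0) = 0"
  unfolding ipr_def std_basis_def by (rule sum.neutral) auto
lemma sqr_zero_E: "sqr m (std_basis a) (\<lambda>_. 0) = 0" by (simp add: sqr_def)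
lemma sqr_zero_F: "sqr m (\<lambda>_. 0) (std_basis a) = 0" by (simp add: sqr_def)

lemma suslinE_block: "suslinE (Suc (Suc m)) k = four_block_mat (std_basis k 1 \<cdot>\<^sub>m 1\<^sub>m (2^m))
   (suslin m (sh (std_basis k)) (\<lambda>_. 0)) (- suslin_bar m (sh (std_basis k)) (\<lambda>_. 0)) (0 \<cdot>\<^sub>m 1\<^sub>m (2^m))"
  unfolding suslinE_def by (simp add: suslin_rec)
lemma suslinF_block: "suslinF (Suc (Suc m)) k = four_block_mat (0 \<cdot>\<^sub>m 1\<^sub>m (2^m))
   (suslin m (\<lambda>_. 0) (sh (std_basis k))) (- suslin_bar m (\<lambda>_. 0) (sh (std_basis k))) (std_basis k 1 \<cdot>\<^sub>m 1\<^sub>m (2^m))"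
  unfolding suslinF_def by (simp add: suslin_rec)

lemma smult_one_one: "(1::'a::comm_ring_1) \<cdot>\<^sub>m 1\<^sub>m d = 1\<^sub>m d" by (rule eq_matI) auto
lemma smult_zero_one: "(0::'a::comm_ring_1) \<cdot>\<^sub>m 1\<^sub>m d = 0\<^sub>m d d" by (rule eq_matI) auto

lemma E1_block: "suslinE (Suc (Suc m)) 1 = four_block_mat (1\<^sub>m (2^m)) (0\<^sub>m (2^m) (2^m)) (0\<^sub>m (2^m) (2^m)) (0\<^sub>m (2^m) (2^m) :: 'a::comm_ring_1 mat)"
proof -
  have z: "suslin m (std_basis 0) (\<lambda>_. 0) = (0\<^sub>m (2^m) (2^m) :: 'a mat)" "suslin_bar m (std_basis 0) (\<lambda>_. 0) = (0\<^sub>m (2^m) (2^m) :: 'a mat)"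
    using suslin_zero[of "std_basis 0" "\<lambda>_. 0" m] by (auto simp: std_basis_def)
  show ?thesis unfolding suslinE_block sh_std[OF order_refl] using z
    by (simp add: std_basis_def smult_one_one smult_zero_one)
qed

lemma F1_block: "suslinF (Suc (Suc m)) 1 = four_block_mat (0\<^sub>m (2^m) (2^m)) (0\<^sub>m (2^m) (2^m)) (0\<^sub>m (2^m) (2^m)) (1\<^sub>m (2^m) :: 'a::comm_ring_1 mat)"
proof -
  have z: "suslin m (\<lambda>_. 0) (std_basis 0) = (0\<^sub>m (2^m) (2^m) :: 'a mat)" "suslin_bar m (\<lambda>_. 0) (std_basis 0) = (0\<^sub>m (2^m) (2^m) :: 'a mat)"
    using suslin_zero[of "\<lambda>_. 0" "std_basis 0" m] by (auto simp: std_basis_def)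
  show ?thesis unfolding suslinF_block sh_std[OF order_refl] using z
    by (simp add: std_basis_def smult_one_one smult_zero_one)
qed

lemma Ek_block: "k \<ge> 2 \<Longrightarrow> suslinE (Suc (Suc m)) k = four_block_mat (0\<^sub>m (2^m) (2^m))
   (suslin m (std_basis (k-1)) (\<lambda>_. 0)) (- suslin_bar m (std_basis (k-1)) (\<lambda>_. 0)) (0\<^sub>m (2^m) (2^m) :: 'a::comm_ring_1 mat)"
proof -
  assume k: "k \<ge> 2"
  then have "std_basis k 1 = (0::'a)" by (simp add: std_basis_def)
  moreover have "sh (std_basis k) = (std_basis (k - 1) :: nat \<Rightarrow> 'a)" using k by (simp add: sh_std)
  ultimately show ?thesis unfolding suslinE_block by (simp add: smult_zero_one)
qed
lemma Fk_block: "k \<ge> 2 \<Longrightarrow> suslinF (Suc (Suc m)) k = four_block_mat (0\<^sub>m (2^m) (2^m))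
   (suslin m (\<lambda>_. 0) (std_basis (k-1))) (- suslin_bar m (\<lambda>_. 0) (std_basis (k-1))) (0\<^sub>m (2^m) (2^m) :: 'a::comm_ring_1 mat)"
proof -
  assume k: "k \<ge> 2"
  then have "std_basis k 1 = (0::'a)" by (simp add: std_basis_def)
  moreover have "sh (std_basis k) = (std_basis (k - 1) :: nat \<Rightarrow> 'a)" using k by (simp add: sh_std)
  ultimately show ?thesis unfolding suslinF_block by (simp add: smult_zero_one)
qed


lemma ids0: "ipr m v w v' w' = 0 \<Longrightarrow>
  suslin m v w * suslin_bar m v' w' + suslin m v' w' * suslin_bar m v w = (0\<^sub>m (2^m) (2^m) :: 'a::comm_ring_1 mat) \<and>
  suslin_bar m v w * suslin m v' w' + suslin_bar m v' w' * suslin m v w = (0\<^sub>m (2^m) (2^m) :: 'a::comm_ring_1 mat)"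
  using suslin_ids[of m v w v' w'] by (simp add: smult_zero_one)
lemma sq0: "sqr m v w = 0 \<Longrightarrow>
  suslin m v w * suslin_bar m v w = (0\<^sub>m (2^m) (2^m) :: 'a::comm_ring_1 mat) \<and>
  suslin_bar m v w * suslin m v w = (0\<^sub>m (2^m) (2^m) :: 'a::comm_ring_1 mat)"
  using suslin_ids[of m v w] by (simp add: smult_zero_one)

lemma pair_ok:
  fixes P Pb Q Qb :: "'a::comm_ring_1 mat"
  assumes ab: "fi = fj \<or> a \<noteq> b"
  and P: "P = (if fi then suslin m (std_basis a) (\<lambda>_. 0) else suslin m (\<lambda>_. 0) (std_basis a))"
  and Pb: "Pb = (if fi then suslin_bar m (std_basis a) (\<lambda>_. 0) else suslin_bar m (\<lambda>_. 0) (std_basis a))"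
  and Q: "Q = (if fj then suslin m (std_basis b) (\<lambda>_. 0) else suslin m (\<lambda>_. 0) (std_basis b))"
  and Qb: "Qb = (if fj then suslin_bar m (std_basis b) (\<lambda>_. 0) else suslin_bar m (\<lambda>_. 0) (std_basis b))"
  shows "P*Qb + Q*Pb = 0\<^sub>m (2^m) (2^m) \<and> Pb*Q + Qb*P = 0\<^sub>m (2^m) (2^m) \<and>
    Pb*P = 0\<^sub>m (2^m) (2^m) \<and> P*Pb = 0\<^sub>m (2^m) (2^m) \<and> Q*Qb = 0\<^sub>m (2^m) (2^m) \<and> Qb*Q = 0\<^sub>m (2^m) (2^m)"
proof -
  have sP: "Pb*P = 0\<^sub>m (2^m) (2^m) \<and> P*Pb = 0\<^sub>m (2^m) (2^m)"
    unfolding P Pb using sq0[OF sqr_zero_E, of m a] sq0[OF sqr_zero_F, of m a] by (cases fi) auto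
  have sQ: "Qb*Q = 0\<^sub>m (2^m) (2^m) \<and> Q*Qb = 0\<^sub>m (2^m) (2^m)"
    unfolding Q Qb using sq0[OF sqr_zero_E, of m b] sq0[OF sqr_zero_F, of m b] by (cases fj) auto
  have h: "P*Qb + Q*Pb = 0\<^sub>m (2^m) (2^m) \<and> Pb*Q + Qb*P = 0\<^sub>m (2^m) (2^m)"
  proof (cases fi; cases fj)
    assume "fi" "fj" then show ?thesis unfolding P Pb Q Qb using ids0[OF ipr_zero_EE[of m a b]] by simp
  next
    assume "\<not> fi" "\<not> fj" then show ?thesis unfolding P Pb Q Qb using ids0[OF ipr_zero_FF[of m a b]] by simp
  next
    assume "fi" "\<not> fj" then have "a \<noteq> b" using ab by auto
    then show ?thesis using \<open>fi\<close> \<open>\<not> fj\<close> unfolding P Pb Q Qb using ids0[OF ipr_zero_EF[of a b m]] by simp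
  next
    assume "\<not> fi" "fj" then have "a \<noteq> b" using ab by auto
    then show ?thesis using \<open>\<not> fi\<close> \<open>fj\<close> unfolding P Pb Q Qb using ids0[OF ipr_zero_FE[of a b m]] by simp
  qed
  show ?thesis using sP sQ h by auto
qed

theorem theorem2p3:
  fixes n :: nat and X :: "nat \<Rightarrow> 'a::comm_ring_1 mat" and c :: 'a and i j :: nat
  assumes hX: "\<forall>k\<in>{1..n}. X k = suslinE n k \<or> X k = suslinF n k"
    and hi: "1 < i" "i \<le> n" and hj: "1 < j" "j \<le> n"
  shows "1\<^sub>m (2 ^ (n - 1)) + c \<cdot>\<^sub>m (X i * X j) =
         mat_comm (1\<^sub>m (2 ^ (n - 1)) + c \<cdot>\<^sub>m (X i * X 1))
                  (1\<^sub>m (2 ^ (n - 1)) + X 1 * X j)"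
proof -
  define m where "m = n - 2"
  have n: "n = Suc (Suc m)" using hi unfolding m_def by auto
  define d where "d = (2::nat)^m"
  have pw: "(2::nat) ^ (n - 1) = d + d" unfolding n d_def by simp
  define f where "f k = (X k = suslinE n k)" for k
  define PP where "PP k = (if f k then suslin m (std_basis (k-1)) (\<lambda>_. 0) else suslin m (\<lambda>_. 0) (std_basis (k-1)) :: 'a mat)" for k
  define PPb where "PPb k = (if f k then suslin_bar m (std_basis (k-1)) (\<lambda>_. 0) else suslin_bar m (\<lambda>_. 0) (std_basis (k-1)) :: 'a mat)" for k
  have Xk: "X k = four_block_mat (0\<^sub>m d d) (PP k) (- PPb k) (0\<^sub>m d d)" if "2 \<le> k" "k \<le> n" for k
  proof (cases "f k")
    case True
    then show ?thesis unfolding PP_def PPb_def d_def using f_def Ek_block[OF that(1), of m] n by simp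
  next
    case False
    then have "X k = suslinF n k" using hX that f_def by auto
    then show ?thesis using False unfolding PP_def PPb_def d_def using Fk_block[OF that(1), of m] n by simp
  qed
  have cP: "PP k \<in> carrier_mat d d" "PPb k \<in> carrier_mat d d" for k unfolding PP_def PPb_def d_def by auto
  have ok: "PP i * PPb j + PP j * PPb i = 0\<^sub>m d d \<and> PPb i * PP j + PPb j * PP i = 0\<^sub>m d d \<and>
    PPb i * PP i = 0\<^sub>m d d \<and> PP i * PPb i = 0\<^sub>m d d \<and> PP j * PPb j = 0\<^sub>m d d \<and> PPb j * PP j = 0\<^sub>m d d"
    unfolding d_def
  proof (rule pair_ok[of "f i" "f j" "i - 1" "j - 1"])
    show "f i = f j \<or> i - 1 \<noteq> j - 1" using hi hj by (cases "i = j") auto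
  qed (auto simp: PP_def PPb_def)
  have h1: "PP i * PPb j + PP j * PPb i = 0\<^sub>m d d" using ok by blast
  have h2: "PPb i * PP j + PPb j * PP i = 0\<^sub>m d d" using ok by blast
  have s1: "PPb i * PP i = 0\<^sub>m d d" using ok by blast
  have s2: "PP i * PPb i = 0\<^sub>m d d" using ok by blast
  have s3: "PP j * PPb j = 0\<^sub>m d d" using ok by blast
  have s4: "PPb j * PP j = 0\<^sub>m d d" using ok by blast
  note R = rels[OF cP(1)[of i] cP(2)[of i] cP(1)[of j] cP(2)[of j] h1 h2 s1 s2 s3 s4]
  have nc: "- PPb k \<in> carrier_mat d d" for k using cP by simp
  have Xi: "X i = four_block_mat (0\<^sub>m d d) (PP i) (- PPb i) (0\<^sub>m d d)" using Xk hi by auto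
  have Xj: "X j = four_block_mat (0\<^sub>m d d) (PP j) (- PPb j) (0\<^sub>m d d)" using Xk hj by auto
  have "X 1 = suslinE n 1 \<or> X 1 = suslinF n 1" using hX hi by auto
  then show ?thesis
  proof
    assume "X 1 = suslinE n 1"
    then have X1: "X 1 = four_block_mat (1\<^sub>m d) (0\<^sub>m d d) (0\<^sub>m d d) (0\<^sub>m d d)" 
    proof -
      have "X 1 = suslinE (Suc (Suc m)) 1" using \<open>X 1 = suslinE n 1\<close> n by simp
      then show ?thesis unfolding d_def E1_block .
    qed
    show ?thesis unfolding pw X1 Xi Xj
      by (rule top_E[OF cP(1)[of i] nc[of i] cP(1)[of j] nc[of j] R(1) R(2) R(3)])
  next
    assume "X 1 = suslinF n 1"
    then have X1: "X 1 = four_block_mat (0\<^sub>m d d) (0\<^sub>m d d) (0\<^sub>m d d) (1\<^sub>m d)" 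
    proof -
      have "X 1 = suslinF (Suc (Suc m)) 1" using \<open>X 1 = suslinF n 1\<close> n by simp
      then show ?thesis unfolding d_def F1_block .
    qed
    show ?thesis unfolding pw X1 Xi Xj
      by (rule top_F[OF cP(1)[of i] nc[of i] cP(1)[of j] nc[of j] R(4) R(5) R(6)])
  qed
qed

end
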